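(* Let $\Gamma$ be a group and $S$ a $\Gamma$-graded regular semigroup. Then the map $I\mapsto I_\varepsilon:=S_\varepsilon\cap I$ is a one-to-one, inclusion-preserving correspondence between the left ideals of $S$ and the left ideals of $S_\varepsilon$ (with inverse $J\mapsto SJ$); likewise for right ideals.
   Context: Semigroups have a zero; $S$ is $\Gamma$-graded via $\deg:S\setminus\{0\}\to\Gamma$ with $\deg(st)=\deg(s)\deg(t)$ whenever $st\neq0$; $S_\alpha=\deg^{-1}(\alpha)\cup\{0\}$, $\varepsilon$ the identity of $\Gamma$. $S$ is regular if every $s$ has $t$ with $sts=s$. *)

theory Defs
  imports Main
begin

text \<open>The semigroup with zero S is the whole type 'a (class semigroup_mult with an
absorbing zero, class mult_zero). The group Gamma is a type 'g of class group_add,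
written additively: its identity epsilon is 0 and the group product is +.\<close>

definition graded :: "('a::{semigroup_mult,mult_zero} \<Rightarrow> 'g::group_add) \<Rightarrow> bool" where
  "graded deg \<longleftrightarrow> (\<forall>s t. s * t \<noteq> 0 \<longrightarrow> deg (s * t) = deg s + deg t)"

definition homog :: "('a::{semigroup_mult,mult_zero} \<Rightarrow> 'g) \<Rightarrow> 'g \<Rightarrow> 'a set" where
  "homog deg \<alpha> = {s. s \<noteq> 0 \<and> deg s = \<alpha>} \<union> {0}"

definition regular_sg :: "'a::semigroup_mult itself \<Rightarrow> bool" where
  "regular_sg _ \<longleftrightarrow> (\<forall>s::'a. \<exists>t. s * t * s = s)"

definition setmul :: "'a::times set \<Rightarrow> 'a set \<Rightarrow> 'a set" where
  "setmul A B = {a * b | a b. a \<in> A \<and> b \<in> B}"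

definition left_ideal :: "'a::times set \<Rightarrow> 'a set \<Rightarrow> bool" where
  "left_ideal A I \<longleftrightarrow> I \<noteq> {} \<and> I \<subseteq> A \<and> (\<forall>a\<in>A. \<forall>x\<in>I. a * x \<in> I)"

definition right_ideal :: "'a::times set \<Rightarrow> 'a set \<Rightarrow> bool" where
  "right_ideal A I \<longleftrightarrow> I \<noteq> {} \<and> I \<subseteq> A \<and> (\<forall>a\<in>A. \<forall>x\<in>I. x * a \<in> I)"

end

theory Submission
  imports Defs
begin

lemma homog0_iff: "x \<in> homog deg 0 \<longleftrightarrow> x = 0 \<or> deg x = 0"
  unfolding homog_def by auto

lemma idem_deg:
  fixes deg :: "'a::{semigroup_mult,mult_zero} \<Rightarrow> 'g::group_add"
  assumes g: "graded deg" and e: "e * e = e"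
  shows "e \<in> homog deg 0"
proof (cases "e = 0")
  case False
  then have "deg e = deg e + deg e" using g e unfolding graded_def by metis
  then have "deg e = 0" by (metis add.right_neutral add_left_cancel)
  then show ?thesis by (simp add: homog0_iff)
qed (simp add: homog0_iff)

lemma homog_mul:
  fixes deg :: "'a::{semigroup_mult,mult_zero} \<Rightarrow> 'g::group_add"
  assumes g: "graded deg" and "a \<in> homog deg 0" "b \<in> homog deg 0"
  shows "a * b \<in> homog deg 0"
  using assms unfolding homog0_iff graded_def by (metis add_0 mult_zero_left mult_zero_right)

lemma homog_left_cancel:
  fixes deg :: "'a::{semigroup_mult,mult_zero} \<Rightarrow> 'g::group_add"
  assumes g: "graded deg" and "s * j \<in> homog deg 0" "j \<in> homog deg 0" "s * j \<noteq> 0"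
  shows "s \<in> homog deg 0"
proof -
  have j0: "j \<noteq> 0" using assms(4) by auto
  have "deg s + deg j = 0" using assms g unfolding graded_def homog0_iff by metis
  then show ?thesis using assms j0 unfolding homog0_iff by simp
qed

lemma homog_right_cancel:
  fixes deg :: "'a::{semigroup_mult,mult_zero} \<Rightarrow> 'g::group_add"
  assumes g: "graded deg" and "j * s \<in> homog deg 0" "j \<in> homog deg 0" "j * s \<noteq> 0"
  shows "s \<in> homog deg 0"
proof -
  have j0: "j \<noteq> 0" using assms(4) by auto
  have "deg j + deg s = 0" using assms g unfolding graded_def homog0_iff by metis
  then show ?thesis using assms j0 unfolding homog0_iff by simp
qed

lemma reg: "regular_sg TYPE('a::semigroup_mult) \<Longrightarrow> \<exists>t. (s::'a) * t * s = s"
  unfolding regular_sg_def by blast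

lemma left_zero: "left_ideal A I \<Longrightarrow> (0::'a::{semigroup_mult,mult_zero}) \<in> A \<Longrightarrow> 0 \<in> I"
  unfolding left_ideal_def by (metis all_not_in_conv mult_zero_left)

lemma right_zero: "right_ideal A I \<Longrightarrow> (0::'a::{semigroup_mult,mult_zero}) \<in> A \<Longrightarrow> 0 \<in> I"
  unfolding right_ideal_def by (metis all_not_in_conv mult_zero_right)

lemma zero_homog: "0 \<in> homog deg 0"
  by (simp add: homog0_iff)

lemma L_recover:
  fixes deg :: "'a::{semigroup_mult,mult_zero} \<Rightarrow> 'g::group_add"
  assumes g: "graded deg" and r: "regular_sg TYPE('a)" and I: "left_ideal UNIV I"
  shows "setmul UNIV (homog deg 0 \<inter> I) = I"
proof
  show "setmul UNIV (homog deg 0 \<inter> I) \<subseteq> I" using I unfolding setmul_def left_ideal_def by auto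
  show "I \<subseteq> setmul UNIV (homog deg 0 \<inter> I)"
  proof
    fix s assume s: "s \<in> I"
    obtain t where t: "s * t * s = s" using reg[OF r] by blast
    have ee: "(t * s) * (t * s) = t * s" using t by (metis mult.assoc)
    have "t * s \<in> homog deg 0" using idem_deg[OF g ee] .
    moreover have "t * s \<in> I" using I s unfolding left_ideal_def by auto
    moreover have "s = s * (t * s)" using t by (simp add: mult.assoc)
    ultimately show "s \<in> setmul UNIV (homog deg 0 \<inter> I)" unfolding setmul_def by blast
  qed
qed

lemma R_recover:
  fixes deg :: "'a::{semigroup_mult,mult_zero} \<Rightarrow> 'g::group_add"
  assumes g: "graded deg" and r: "regular_sg TYPE('a)" and I: "right_ideal UNIV I"
  shows "setmul (homog deg 0 \<inter> I) UNIV = I"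
proof
  show "setmul (homog deg 0 \<inter> I) UNIV \<subseteq> I" using I unfolding setmul_def right_ideal_def by auto
  show "I \<subseteq> setmul (homog deg 0 \<inter> I) UNIV"
  proof
    fix s assume s: "s \<in> I"
    obtain t where t: "s * t * s = s" using reg[OF r] by blast
    have ee: "(s * t) * (s * t) = s * t" using t by (metis mult.assoc)
    have "s * t \<in> homog deg 0" using idem_deg[OF g ee] .
    moreover have "s * t \<in> I" using I s unfolding right_ideal_def by auto
    moreover have "s = (s * t) * s" using t by simp
    ultimately show "s \<in> setmul (homog deg 0 \<inter> I) UNIV" unfolding setmul_def by blast
  qed
qed

lemma L_gen:
  fixes deg :: "'a::{semigroup_mult,mult_zero} \<Rightarrow> 'g::group_add"
  assumes g: "graded deg" and r: "regular_sg TYPE('a)" and J: "left_ideal (homog deg 0) J"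
  shows "left_ideal UNIV (setmul UNIV J) \<and> homog deg 0 \<inter> setmul UNIV J = J"
proof
  have J0: "0 \<in> J" using left_zero[OF J zero_homog] .
  show "left_ideal UNIV (setmul UNIV J)"
    unfolding left_ideal_def setmul_def using J0
    by (auto simp: mult.assoc[symmetric]) (metis mult.assoc)
  show "homog deg 0 \<inter> setmul UNIV J = J"
  proof
    show "homog deg 0 \<inter> setmul UNIV J \<subseteq> J"
    proof
      fix x assume x: "x \<in> homog deg 0 \<inter> setmul UNIV J"
      then obtain s j where sj: "x = s * j" "j \<in> J" unfolding setmul_def by blast
      show "x \<in> J"
      proof (cases "x = 0")
        case True then show ?thesis using J0 by simp
      next
        case False
        have jh: "j \<in> homog deg 0" using J sj unfolding left_ideal_def by auto
        have "s \<in> homog deg 0" using homog_left_cancel[OF g _ jh] x sj False by auto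
        then show ?thesis using J sj unfolding left_ideal_def by auto
      qed
    qed
    show "J \<subseteq> homog deg 0 \<inter> setmul UNIV J"
    proof
      fix j assume j: "j \<in> J"
      have jh: "j \<in> homog deg 0" using J j unfolding left_ideal_def by auto
      obtain t where t: "j * t * j = j" using reg[OF r] by blast
      have "j = (j * t) * j" using t by simp
      then have "j \<in> setmul UNIV J" unfolding setmul_def using j by blast
      then show "j \<in> homog deg 0 \<inter> setmul UNIV J" using jh by blast
    qed
  qed
qed

lemma R_gen:
  fixes deg :: "'a::{semigroup_mult,mult_zero} \<Rightarrow> 'g::group_add"
  assumes g: "graded deg" and r: "regular_sg TYPE('a)" and J: "right_ideal (homog deg 0) J"
  shows "right_ideal UNIV (setmul J UNIV) \<and> homog deg 0 \<inter> setmul J UNIV = J"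
proof
  have J0: "0 \<in> J" using right_zero[OF J zero_homog] .
  show "right_ideal UNIV (setmul J UNIV)"
    unfolding right_ideal_def setmul_def using J0
    by (auto simp: mult.assoc) (metis mult.assoc)
  show "homog deg 0 \<inter> setmul J UNIV = J"
  proof
    show "homog deg 0 \<inter> setmul J UNIV \<subseteq> J"
    proof
      fix x assume x: "x \<in> homog deg 0 \<inter> setmul J UNIV"
      then obtain s j where sj: "x = j * s" "j \<in> J" unfolding setmul_def by blast
      show "x \<in> J"
      proof (cases "x = 0")
        case True then show ?thesis using J0 by simp
      next
        case False
        have jh: "j \<in> homog deg 0" using J sj unfolding right_ideal_def by auto
        have "s \<in> homog deg 0" using homog_right_cancel[OF g _ jh] x sj False by auto
        then show ?thesis using J sj unfolding right_ideal_def by auto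
      qed
    qed
    show "J \<subseteq> homog deg 0 \<inter> setmul J UNIV"
    proof
      fix j assume j: "j \<in> J"
      have jh: "j \<in> homog deg 0" using J j unfolding right_ideal_def by auto
      obtain t where t: "j * t * j = j" using reg[OF r] by blast
      have "j = j * (t * j)" using t by (simp add: mult.assoc)
      then have "j \<in> setmul J UNIV" unfolding setmul_def using j by blast
      then show "j \<in> homog deg 0 \<inter> setmul J UNIV" using jh by blast
    qed
  qed
qed

lemma L_restrict:
  fixes deg :: "'a::{semigroup_mult,mult_zero} \<Rightarrow> 'g::group_add"
  assumes g: "graded deg" and I: "left_ideal UNIV I"
  shows "left_ideal (homog deg 0) (homog deg 0 \<inter> I)"
  using I left_zero[OF I] homog_mul[OF g] zero_homog unfolding left_ideal_def by blast

lemma R_restrict: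
  fixes deg :: "'a::{semigroup_mult,mult_zero} \<Rightarrow> 'g::group_add"
  assumes g: "graded deg" and I: "right_ideal UNIV I"
  shows "right_ideal (homog deg 0) (homog deg 0 \<inter> I)"
  using I right_zero[OF I] homog_mul[OF g] zero_homog unfolding right_ideal_def by blast

lemma setmul_mono: "A \<subseteq> A' \<Longrightarrow> B \<subseteq> B' \<Longrightarrow> setmul A B \<subseteq> setmul A' B'"
  unfolding setmul_def by blast

theorem proposition2p7:
  fixes deg :: "'a::{semigroup_mult,mult_zero} \<Rightarrow> 'g::group_add"
  assumes "graded deg" and "regular_sg TYPE('a)"
  shows
   "bij_betw (\<lambda>I. homog deg 0 \<inter> I) {I. left_ideal UNIV I} {J. left_ideal (homog deg 0) J}
    \<and> (\<forall>I1 I2. left_ideal UNIV I1 \<longrightarrow> left_ideal UNIV I2 \<longrightarrow>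
          (I1 \<subseteq> I2 \<longleftrightarrow> homog deg 0 \<inter> I1 \<subseteq> homog deg 0 \<inter> I2))
    \<and> (\<forall>I. left_ideal UNIV I \<longrightarrow> setmul UNIV (homog deg 0 \<inter> I) = I)
    \<and> (\<forall>J. left_ideal (homog deg 0) J \<longrightarrow> left_ideal UNIV (setmul UNIV J)
          \<and> homog deg 0 \<inter> setmul UNIV J = J)
    \<and> bij_betw (\<lambda>I. homog deg 0 \<inter> I) {I. right_ideal UNIV I} {J. right_ideal (homog deg 0) J}
    \<and> (\<forall>I1 I2. right_ideal UNIV I1 \<longrightarrow> right_ideal UNIV I2 \<longrightarrow>
          (I1 \<subseteq> I2 \<longleftrightarrow> homog deg 0 \<inter> I1 \<subseteq> homog deg 0 \<inter> I2))
    \<and> (\<forall>I. right_ideal UNIV I \<longrightarrow> setmul (homog deg 0 \<inter> I) UNIV = I)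
    \<and> (\<forall>J. right_ideal (homog deg 0) J \<longrightarrow> right_ideal UNIV (setmul J UNIV)
          \<and> homog deg 0 \<inter> setmul J UNIV = J)"
proof -
  note g = assms(1) and r = assms(2)
  note LR = L_recover[OF g r] and RR = R_recover[OF g r]
  note LG = L_gen[OF g r] and RG = R_gen[OF g r]
  have b1: "bij_betw (\<lambda>I. homog deg 0 \<inter> I) {I. left_ideal UNIV I} {J. left_ideal (homog deg 0) J}"
  proof (rule bij_betwI')
    show "\<And>x y. x \<in> {I. left_ideal UNIV I} \<Longrightarrow> y \<in> {I. left_ideal UNIV I} \<Longrightarrow>
      (homog deg 0 \<inter> x = homog deg 0 \<inter> y) = (x = y)" using LR by (metis mem_Collect_eq)
    show "\<And>x. x \<in> {I. left_ideal UNIV I} \<Longrightarrow> homog deg 0 \<inter> x \<in> {J. left_ideal (homog deg 0) J}"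
      using L_restrict[OF g] by auto
    show "\<And>y. y \<in> {J. left_ideal (homog deg 0) J} \<Longrightarrow> \<exists>x\<in>{I. left_ideal UNIV I}. y = homog deg 0 \<inter> x"
      using LG by (metis mem_Collect_eq)
  qed
  have b2: "bij_betw (\<lambda>I. homog deg 0 \<inter> I) {I. right_ideal UNIV I} {J. right_ideal (homog deg 0) J}"
  proof (rule bij_betwI')
    show "\<And>x y. x \<in> {I. right_ideal UNIV I} \<Longrightarrow> y \<in> {I. right_ideal UNIV I} \<Longrightarrow>
      (homog deg 0 \<inter> x = homog deg 0 \<inter> y) = (x = y)" using RR by (metis mem_Collect_eq)
    show "\<And>x. x \<in> {I. right_ideal UNIV I} \<Longrightarrow> homog deg 0 \<inter> x \<in> {J. right_ideal (homog deg 0) J}"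
      using R_restrict[OF g] by auto
    show "\<And>y. y \<in> {J. right_ideal (homog deg 0) J} \<Longrightarrow> \<exists>x\<in>{I. right_ideal UNIV I}. y = homog deg 0 \<inter> x"
      using RG by (metis mem_Collect_eq)
  qed
  have m1: "\<forall>I1 I2. left_ideal UNIV I1 \<longrightarrow> left_ideal UNIV I2 \<longrightarrow>
          (I1 \<subseteq> I2 \<longleftrightarrow> homog deg 0 \<inter> I1 \<subseteq> homog deg 0 \<inter> I2)"
  proof (intro allI impI iffI)
    fix I1 I2 :: "'a set"
    assume a: "left_ideal UNIV I1" "left_ideal UNIV I2" "homog deg 0 \<inter> I1 \<subseteq> homog deg 0 \<inter> I2"
    show "I1 \<subseteq> I2" using setmul_mono[OF subset_refl a(3), of UNIV] LR[OF a(1)] LR[OF a(2)] by simp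
  qed blast
  have m2: "\<forall>I1 I2. right_ideal UNIV I1 \<longrightarrow> right_ideal UNIV I2 \<longrightarrow>
          (I1 \<subseteq> I2 \<longleftrightarrow> homog deg 0 \<inter> I1 \<subseteq> homog deg 0 \<inter> I2)"
  proof (intro allI impI iffI)
    fix I1 I2 :: "'a set"
    assume a: "right_ideal UNIV I1" "right_ideal UNIV I2" "homog deg 0 \<inter> I1 \<subseteq> homog deg 0 \<inter> I2"
    show "I1 \<subseteq> I2" using setmul_mono[OF a(3) subset_refl, of UNIV] RR[OF a(1)] RR[OF a(2)] by simp
  qed blast
  show ?thesis using b1 b2 m1 m2 LR RR LG RG by blast
qed

end
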